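(* Let $A$ be a partial ring. For every $a\in A$, the subset $D(a)$ of $X_A$ is quasi-compact. In particular $X_A$ is quasi-compact.
   Context: A partial ring is a set $A$ with $0$, a set $A_2\subseteq A\times A$ of summable pairs and a partial addition $+\colon A_2\to A$ (with $0$ a unit summable with everything, commutative, and associative in the sense: $(a,b),(a+b,c)\in A_2$ iff $(b,c),(a,b+c)\in A_2$, and then $(a+b)+c=a+(b+c)$), together with a commutative associative multiplication with unit $1$ such that $0\cdot a=0$ and $(a_1,a_2)\in A_2\Rightarrow(a_1x,a_2x)\in A_2$, $(a_1+a_2)x=a_1x+a_2x$. An ideal is a subset $I\ni 0$ closed under sums of pairs in $A_2\cap(I\times I)$ and with $AI\subseteq I$; a prime ideal is an ideal $I\neq A$ with $ab\in I\Rightarrow a\in I$ or $b\in I$. $X_A$ is the set of prime ideals of $A$; for $a\in A$, $D(a)=\{\mathfrak{p}\in X_A: a\notin\mathfrak{p}\}$; $X_A$ carries the topology generated by the sets $D(a)$, $a\in A$. *)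

theory Defs
  imports "HOL-Analysis.Analysis"
begin

text \<open>A partial ring on the carrier A: S is the set of summable pairs, add the partial
  addition (only meaningful on S), mul the multiplication, z the zero and u the unit.\<close>

definition partial_ring ::
  "'a set \<Rightarrow> ('a \<times> 'a) set \<Rightarrow> ('a \<Rightarrow> 'a \<Rightarrow> 'a) \<Rightarrow> ('a \<Rightarrow> 'a \<Rightarrow> 'a) \<Rightarrow> 'a \<Rightarrow> 'a \<Rightarrow> bool"
where
  "partial_ring A S add mul z u \<longleftrightarrow>
     z \<in> A \<and> u \<in> A \<and> S \<subseteq> A \<times> A \<and>
     (\<forall>(a, b) \<in> S. add a b \<in> A) \<and>
     (\<forall>a \<in> A. \<forall>b \<in> A. mul a b \<in> A) \<and>
     \<comment> \<open>0 is a unit summable with everything\<close>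
     (\<forall>a \<in> A. (a, z) \<in> S \<and> add a z = a) \<and>
     \<comment> \<open>commutativity\<close>
     (\<forall>a b. (a, b) \<in> S \<longrightarrow> (b, a) \<in> S \<and> add a b = add b a) \<and>
     \<comment> \<open>associativity\<close>
     (\<forall>a \<in> A. \<forall>b \<in> A. \<forall>c \<in> A.
        (((a, b) \<in> S \<and> (add a b, c) \<in> S) \<longleftrightarrow> ((b, c) \<in> S \<and> (a, add b c) \<in> S)) \<and>
        ((a, b) \<in> S \<and> (add a b, c) \<in> S \<longrightarrow> add (add a b) c = add a (add b c))) \<and>
     \<comment> \<open>multiplication: commutative, associative, unit u, z absorbing\<close>
     (\<forall>a \<in> A. \<forall>b \<in> A. mul a b = mul b a) \<and>
     (\<forall>a \<in> A. \<forall>b \<in> A. \<forall>c \<in> A. mul (mul a b) c = mul a (mul b c)) \<and>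
     (\<forall>a \<in> A. mul u a = a) \<and>
     (\<forall>a \<in> A. mul z a = z) \<and>
     \<comment> \<open>distributivity\<close>
     (\<forall>a1 a2 x. (a1, a2) \<in> S \<and> x \<in> A \<longrightarrow>
        (mul a1 x, mul a2 x) \<in> S \<and> mul (add a1 a2) x = add (mul a1 x) (mul a2 x))"

definition pr_ideal ::
  "'a set \<Rightarrow> ('a \<times> 'a) set \<Rightarrow> ('a \<Rightarrow> 'a \<Rightarrow> 'a) \<Rightarrow> ('a \<Rightarrow> 'a \<Rightarrow> 'a) \<Rightarrow> 'a \<Rightarrow> 'a set \<Rightarrow> bool"
where
  "pr_ideal A S add mul z I \<longleftrightarrow>
     I \<subseteq> A \<and> z \<in> I \<and>
     (\<forall>a b. (a, b) \<in> S \<and> a \<in> I \<and> b \<in> I \<longrightarrow> add a b \<in> I) \<and>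
     (\<forall>a \<in> A. \<forall>x \<in> I. mul a x \<in> I)"

definition pr_prime_ideal ::
  "'a set \<Rightarrow> ('a \<times> 'a) set \<Rightarrow> ('a \<Rightarrow> 'a \<Rightarrow> 'a) \<Rightarrow> ('a \<Rightarrow> 'a \<Rightarrow> 'a) \<Rightarrow> 'a \<Rightarrow> 'a set \<Rightarrow> bool"
where
  "pr_prime_ideal A S add mul z P \<longleftrightarrow>
     pr_ideal A S add mul z P \<and> P \<noteq> A \<and>
     (\<forall>a \<in> A. \<forall>b \<in> A. mul a b \<in> P \<longrightarrow> a \<in> P \<or> b \<in> P)"

definition pr_spec ::
  "'a set \<Rightarrow> ('a \<times> 'a) set \<Rightarrow> ('a \<Rightarrow> 'a \<Rightarrow> 'a) \<Rightarrow> ('a \<Rightarrow> 'a \<Rightarrow> 'a) \<Rightarrow> 'a \<Rightarrow> 'a set set"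
where
  "pr_spec A S add mul z = {P. pr_prime_ideal A S add mul z P}"

definition pr_D ::
  "'a set \<Rightarrow> ('a \<times> 'a) set \<Rightarrow> ('a \<Rightarrow> 'a \<Rightarrow> 'a) \<Rightarrow> ('a \<Rightarrow> 'a \<Rightarrow> 'a) \<Rightarrow> 'a \<Rightarrow> 'a \<Rightarrow> 'a set set"
where
  "pr_D A S add mul z a = {P \<in> pr_spec A S add mul z. a \<notin> P}"

definition pr_zariski ::
  "'a set \<Rightarrow> ('a \<times> 'a) set \<Rightarrow> ('a \<Rightarrow> 'a \<Rightarrow> 'a) \<Rightarrow> ('a \<Rightarrow> 'a \<Rightarrow> 'a) \<Rightarrow> 'a \<Rightarrow> 'a set topology"
where
  "pr_zariski A S add mul z = topology_generated_by (pr_D A S add mul z ` A)"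

end

theory Submission
  imports Defs
begin

locale pring =
  fixes A S add mul z u
  assumes pr: "partial_ring A S add mul z u"
begin

lemma zA: "z \<in> A"
  using pr unfolding partial_ring_def by (elim conjE) assumption
lemma uA: "u \<in> A"
  using pr unfolding partial_ring_def by (elim conjE) assumption

lemma addA_all: "\<forall>(a, b) \<in> S. add a b \<in> A"
  using pr unfolding partial_ring_def by (elim conjE) assumption
lemma mulA_all: "\<forall>a \<in> A. \<forall>b \<in> A. mul a b \<in> A"
  using pr unfolding partial_ring_def by (elim conjE) assumption
lemma mulC_all: "\<forall>a \<in> A. \<forall>b \<in> A. mul a b = mul b a"
  using pr unfolding partial_ring_def by (elim conjE) assumption
lemma mulAs_all: "\<forall>a \<in> A. \<forall>b \<in> A. \<forall>c \<in> A. mul (mul a b) c = mul a (mul b c)"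
  using pr unfolding partial_ring_def by (elim conjE) assumption
lemma mulU_all: "\<forall>a \<in> A. mul u a = a"
  using pr unfolding partial_ring_def by (elim conjE) assumption
lemma mulZ_all: "\<forall>a \<in> A. mul z a = z"
  using pr unfolding partial_ring_def by (elim conjE) assumption
lemma dist_all: "\<forall>a1 a2 x. (a1, a2) \<in> S \<and> x \<in> A \<longrightarrow>
        (mul a1 x, mul a2 x) \<in> S \<and> mul (add a1 a2) x = add (mul a1 x) (mul a2 x)"
  using pr unfolding partial_ring_def by (elim conjE) assumption

lemma addA: "(a, b) \<in> S \<Longrightarrow> add a b \<in> A" using addA_all by blast
lemma mulA: "a \<in> A \<Longrightarrow> b \<in> A \<Longrightarrow> mul a b \<in> A" using mulA_all by blast
lemma mulC: "a \<in> A \<Longrightarrow> b \<in> A \<Longrightarrow> mul a b = mul b a" using mulC_all by blast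
lemma mulAs: "a \<in> A \<Longrightarrow> b \<in> A \<Longrightarrow> c \<in> A \<Longrightarrow> mul (mul a b) c = mul a (mul b c)"
  using mulAs_all by blast
lemma mulU: "a \<in> A \<Longrightarrow> mul u a = a" using mulU_all by blast
lemma mulZ: "a \<in> A \<Longrightarrow> mul z a = z" using mulZ_all by blast
lemma distS: "(a1, a2) \<in> S \<Longrightarrow> x \<in> A \<Longrightarrow> (mul a1 x, mul a2 x) \<in> S" using dist_all by blast
lemma dist: "(a1, a2) \<in> S \<Longrightarrow> x \<in> A \<Longrightarrow> mul (add a1 a2) x = add (mul a1 x) (mul a2 x)"
  using dist_all by blast

lemma A_ideal: "pr_ideal A S add mul z A"
  unfolding pr_ideal_def using zA addA mulA by blast

definition gen :: "'a set \<Rightarrow> 'a set" where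
  "gen X = \<Inter>{I. pr_ideal A S add mul z I \<and> X \<subseteq> I}"

lemma gen_least: "pr_ideal A S add mul z I \<Longrightarrow> X \<subseteq> I \<Longrightarrow> gen X \<subseteq> I"
  unfolding gen_def by blast

lemma gen_sub: "X \<subseteq> gen X"
  unfolding gen_def by blast

lemma gen_ideal: assumes "X \<subseteq> A" shows "pr_ideal A S add mul z (gen X)"
proof -
  have ne: "A \<in> {I. pr_ideal A S add mul z I \<and> X \<subseteq> I}" using A_ideal assms by blast
  have 1: "gen X \<subseteq> A" using ne unfolding gen_def by blast
  have 2: "z \<in> gen X" unfolding gen_def pr_ideal_def by blast
  have 3: "\<forall>a b. (a, b) \<in> S \<and> a \<in> gen X \<and> b \<in> gen X \<longrightarrow> add a b \<in> gen X"
    unfolding gen_def pr_ideal_def by blast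
  have 4: "\<forall>a\<in>A. \<forall>x\<in>gen X. mul a x \<in> gen X"
    unfolding gen_def pr_ideal_def by blast
  show ?thesis unfolding pr_ideal_def using 1 2 3 4 by blast
qed

lemma gen_mono: "X \<subseteq> Y \<Longrightarrow> Y \<subseteq> A \<Longrightarrow> gen X \<subseteq> gen Y"
  by (meson gen_ideal gen_least gen_sub order_trans)

fun pw :: "'a \<Rightarrow> nat \<Rightarrow> 'a" where
  "pw a 0 = u"
| "pw a (Suc n) = mul a (pw a n)"

lemma pwA: "a \<in> A \<Longrightarrow> pw a n \<in> A"
  by (induction n) (auto simp: uA mulA)

lemma pw_add: "a \<in> A \<Longrightarrow> pw a (m + n) = mul (pw a m) (pw a n)"
  by (induction m) (auto simp: mulU pwA mulAs)

lemma ideal_u: "pr_ideal A S add mul z P \<Longrightarrow> u \<in> P \<Longrightarrow> P = A"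
  unfolding pr_ideal_def using mulC uA mulU
  by (metis subsetI subset_antisym)

lemma prime_pw: assumes "pr_prime_ideal A S add mul z P" "a \<in> A" "pw a n \<in> P"
  shows "a \<in> P"
  using assms(3)
proof (induction n)
  case 0
  then show ?case using assms(1) ideal_u unfolding pr_prime_ideal_def by auto
next
  case (Suc n)
  then show ?case using assms(1,2) pwA unfolding pr_prime_ideal_def by auto
qed

lemma colon_ideal: assumes "pr_ideal A S add mul z P" "t \<in> A"
  shows "pr_ideal A S add mul z {c \<in> A. mul c t \<in> P}"
  unfolding pr_ideal_def
proof (intro conjI allI impI ballI)
  show "{c \<in> A. mul c t \<in> P} \<subseteq> A" by blast
  show "z \<in> {c \<in> A. mul c t \<in> P}" using assms zA mulZ unfolding pr_ideal_def by auto
next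
  fix a b assume h: "(a, b) \<in> S \<and> a \<in> {c \<in> A. mul c t \<in> P} \<and> b \<in> {c \<in> A. mul c t \<in> P}"
  then show "add a b \<in> {c \<in> A. mul c t \<in> P}"
    using assms addA dist[of a b t] distS[of a b t] unfolding pr_ideal_def by auto
next
  fix a x assume "a \<in> A" "x \<in> {c \<in> A. mul c t \<in> P}"
  then show "mul a x \<in> {c \<in> A. mul c t \<in> P}"
    using assms mulA mulAs unfolding pr_ideal_def by auto
qed

lemma colon_key: assumes P: "pr_ideal A S add mul z P" and x: "x \<in> A" and y: "y \<in> A"
  and xy: "mul x y \<in> P" and s: "s \<in> gen (insert x P)" and t: "t \<in> gen (insert y P)"
  shows "mul s t \<in> P"
proof -
  have PA: "P \<subseteq> A" using P unfolding pr_ideal_def by blast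
  have cm: "mul c t' \<in> P" if "c \<in> P" "t' \<in> A" for c t'
  proof -
    have "mul t' c \<in> P" using P that unfolding pr_ideal_def by blast
    then show ?thesis using mulC[of c t'] PA that by auto
  qed
  have "insert x P \<subseteq> {c \<in> A. mul c y \<in> P}"
    using PA x y xy cm by auto
  then have "gen (insert x P) \<subseteq> {c \<in> A. mul c y \<in> P}"
    by (rule gen_least[OF colon_ideal[OF P y]])
  with s have sy: "s \<in> A" "mul s y \<in> P" by auto
  have "insert y P \<subseteq> {c \<in> A. mul c s \<in> P}"
    using PA y sy cm mulC[of y s] by auto
  then have "gen (insert y P) \<subseteq> {c \<in> A. mul c s \<in> P}"
    by (rule gen_least[OF colon_ideal[OF P sy(1)]])
  with t have "t \<in> A" "mul t s \<in> P" by auto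
  then show ?thesis using mulC sy by metis
qed

lemma exists_prime:
  assumes J: "pr_ideal A S add mul z J" and a: "a \<in> A" and np: "\<forall>n. pw a n \<notin> J"
  shows "\<exists>P. pr_prime_ideal A S add mul z P \<and> J \<subseteq> P \<and> a \<notin> P"
proof -
  define M where "M = {I. pr_ideal A S add mul z I \<and> J \<subseteq> I \<and> (\<forall>n. pw a n \<notin> I)}"
  have "M \<noteq> {}" using J np unfolding M_def by blast
  moreover have "\<Union>C \<in> M" if "C \<noteq> {}" "subset.chain M C" for C
  proof -
    have CM: "C \<subseteq> M" and ch: "\<forall>X\<in>C. \<forall>Y\<in>C. X \<subseteq> Y \<or> Y \<subseteq> X"
      using that(2) unfolding subset.chain_def by auto
    have id: "\<And>I. I \<in> C \<Longrightarrow> pr_ideal A S add mul z I" using CM unfolding M_def by blast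
    have "pr_ideal A S add mul z (\<Union>C)"
      unfolding pr_ideal_def
    proof (intro conjI allI impI ballI)
      show "\<Union>C \<subseteq> A" using id unfolding pr_ideal_def by blast
      show "z \<in> \<Union>C" using id that(1) unfolding pr_ideal_def by blast
    next
      fix p q assume h: "(p, q) \<in> S \<and> p \<in> \<Union>C \<and> q \<in> \<Union>C"
      then obtain X Y where XY: "X \<in> C" "Y \<in> C" "p \<in> X" "q \<in> Y" by blast
      show "add p q \<in> \<Union>C"
      proof (cases "X \<subseteq> Y")
        case True
        then show ?thesis using XY h id[of Y] unfolding pr_ideal_def by blast
      next
        case False
        then have "Y \<subseteq> X" using ch XY by blast
        then show ?thesis using XY h id[of X] unfolding pr_ideal_def by blast
      qed
    next
      fix p q assume "p \<in> A" "q \<in> \<Union>C"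
      then show "mul p q \<in> \<Union>C" using id unfolding pr_ideal_def by blast
    qed
    moreover have "J \<subseteq> \<Union>C" using that(1) CM unfolding M_def by blast
    moreover have "\<forall>n. pw a n \<notin> \<Union>C" using CM unfolding M_def by blast
    ultimately show ?thesis unfolding M_def by blast
  qed
  ultimately obtain P where PM: "P \<in> M" and max: "\<forall>X\<in>M. P \<subseteq> X \<longrightarrow> X = P"
    using subset_Zorn_nonempty[of M] by blast
  have Pid: "pr_ideal A S add mul z P" and JP: "J \<subseteq> P" and Pnp: "\<forall>n. pw a n \<notin> P"
    using PM unfolding M_def by auto
  have PA: "P \<subseteq> A" using Pid unfolding pr_ideal_def by blast
  have ext: "\<exists>n. pw a n \<in> gen (insert x P)" if x: "x \<in> A" "x \<notin> P" for x
  proof (rule ccontr)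
    assume "\<not> ?thesis"
    moreover have "pr_ideal A S add mul z (gen (insert x P))" using gen_ideal x PA by blast
    moreover have "P \<subseteq> gen (insert x P)" "x \<in> gen (insert x P)" using gen_sub by blast+
    ultimately have "gen (insert x P) \<in> M" using JP unfolding M_def by blast
    with max \<open>P \<subseteq> gen (insert x P)\<close> have "gen (insert x P) = P" by blast
    with \<open>x \<in> gen (insert x P)\<close> x show False by blast
  qed
  have prime: "pr_prime_ideal A S add mul z P"
    unfolding pr_prime_ideal_def
  proof (intro conjI ballI impI)
    show "P \<noteq> A" using Pnp[rule_format, of 0] uA by auto
  next
    fix x y assume xy: "x \<in> A" "y \<in> A" "mul x y \<in> P"
    show "x \<in> P \<or> y \<in> P"
    proof (rule ccontr)
      assume "\<not> ?thesis"
      then obtain m n where "pw a m \<in> gen (insert x P)" "pw a n \<in> gen (insert y P)"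
        using ext xy by blast
      then have "mul (pw a m) (pw a n) \<in> P" using colon_key[OF Pid xy(1,2,3)] by blast
      then show False using pw_add[OF a, of m n] Pnp by metis
    qed
  qed (rule Pid)
  have "a \<notin> P" using Pnp[rule_format, of 1] a mulC[OF a uA] mulU[OF a] by auto
  then show ?thesis using prime JP by blast
qed

lemma gen_finite: assumes B: "B \<subseteq> A" and x: "x \<in> gen B"
  shows "\<exists>B0. finite B0 \<and> B0 \<subseteq> B \<and> x \<in> gen B0"
proof -
  define U where "U = {x. \<exists>B0. finite B0 \<and> B0 \<subseteq> B \<and> x \<in> gen B0}"
  have genA: "\<And>B0. B0 \<subseteq> B \<Longrightarrow> gen B0 \<subseteq> A" using gen_ideal B unfolding pr_ideal_def
    by (meson order_trans)
  have "pr_ideal A S add mul z U"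
    unfolding pr_ideal_def
  proof (intro conjI allI impI ballI)
    show "U \<subseteq> A" unfolding U_def using genA by blast
    show "z \<in> U" unfolding U_def using gen_ideal[of "{}"] unfolding pr_ideal_def by blast
  next
    fix p q assume h: "(p, q) \<in> S \<and> p \<in> U \<and> q \<in> U"
    then obtain B1 B2 where b: "finite B1" "B1 \<subseteq> B" "p \<in> gen B1" "finite B2" "B2 \<subseteq> B" "q \<in> gen B2"
      unfolding U_def by blast
    have "gen B1 \<subseteq> gen (B1 \<union> B2)" "gen B2 \<subseteq> gen (B1 \<union> B2)"
      using gen_mono b B by (meson Un_least Un_upper1 Un_upper2 order_trans)+
    moreover have "pr_ideal A S add mul z (gen (B1 \<union> B2))" using gen_ideal b B by blast
    ultimately have "add p q \<in> gen (B1 \<union> B2)" using b h unfolding pr_ideal_def by blast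
    then show "add p q \<in> U" unfolding U_def using b by blast
  next
    fix p q assume h: "p \<in> A" "q \<in> U"
    then obtain B1 where b: "finite B1" "B1 \<subseteq> B" "q \<in> gen B1" unfolding U_def by blast
    then have "mul p q \<in> gen B1" using gen_ideal[of B1] B h unfolding pr_ideal_def by blast
    then show "mul p q \<in> U" unfolding U_def using b by blast
  qed
  moreover have "B \<subseteq> U" unfolding U_def using gen_sub
    by (auto intro!: exI[where x="{_}"])
  ultimately have "gen B \<subseteq> U" by (rule gen_least)
  then show ?thesis using x unfolding U_def by blast
qed

lemma basic_cover:
  assumes a: "a \<in> A" and B: "B \<subseteq> A"
    and cov: "pr_D A S add mul z a \<subseteq> (\<Union>b\<in>B. pr_D A S add mul z b)"
  shows "\<exists>B0. finite B0 \<and> B0 \<subseteq> B \<and> pr_D A S add mul z a \<subseteq> (\<Union>b\<in>B0. pr_D A S add mul z b)"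
proof -
  have "\<exists>n. pw a n \<in> gen B"
  proof (rule ccontr)
    assume "\<not> ?thesis"
    then obtain P where P: "pr_prime_ideal A S add mul z P" "gen B \<subseteq> P" "a \<notin> P"
      using exists_prime[OF gen_ideal[OF B] a] by blast
    then have "P \<in> pr_D A S add mul z a" unfolding pr_D_def pr_spec_def by blast
    then obtain b where "b \<in> B" "b \<notin> P" using cov unfolding pr_D_def by blast
    then show False using gen_sub P(2) by blast
  qed
  then obtain n where "pw a n \<in> gen B" by blast
  then obtain B0 where B0: "finite B0" "B0 \<subseteq> B" "pw a n \<in> gen B0" using gen_finite[OF B] by blast
  have "pr_D A S add mul z a \<subseteq> (\<Union>b\<in>B0. pr_D A S add mul z b)"
  proof
    fix P assume P: "P \<in> pr_D A S add mul z a"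
    then have Pp: "pr_prime_ideal A S add mul z P" "a \<notin> P" unfolding pr_D_def pr_spec_def by auto
    show "P \<in> (\<Union>b\<in>B0. pr_D A S add mul z b)"
    proof (rule ccontr)
      assume "\<not> ?thesis"
      then have "B0 \<subseteq> P" using Pp unfolding pr_D_def pr_spec_def by blast
      then have "gen B0 \<subseteq> P" using gen_least Pp unfolding pr_prime_ideal_def by blast
      then show False using prime_pw[OF Pp(1) a] B0 Pp(2) by blast
    qed
  qed
  then show ?thesis using B0 by blast
qed

lemma D_int: assumes a: "a \<in> A" and b: "b \<in> A"
  shows "pr_D A S add mul z (mul a b) = pr_D A S add mul z a \<inter> pr_D A S add mul z b"
proof -
  have "mul a b \<in> P \<longleftrightarrow> a \<in> P \<or> b \<in> P" if P: "pr_prime_ideal A S add mul z P" for P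
  proof
    assume "mul a b \<in> P" then show "a \<in> P \<or> b \<in> P" using P a b unfolding pr_prime_ideal_def by blast
  next
    assume h: "a \<in> P \<or> b \<in> P"
    have I: "\<forall>c\<in>A. \<forall>x\<in>P. mul c x \<in> P" using P unfolding pr_prime_ideal_def pr_ideal_def by blast
    show "mul a b \<in> P"
    proof (cases "a \<in> P")
      case True
      then have "mul b a \<in> P" using I b by blast
      then show ?thesis using mulC[OF a b] by simp
    next
      case False
      then have "b \<in> P" using h by blast
      then show ?thesis using I a by blast
    qed
  qed
  then show ?thesis unfolding pr_D_def pr_spec_def by blast
qed

lemma open_basic:
  assumes "generate_topology_on (pr_D A S add mul z ` A) U" "P \<in> U"
  shows "\<exists>c\<in>A. P \<in> pr_D A S add mul z c \<and> pr_D A S add mul z c \<subseteq> U"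
  using assms
proof (induction arbitrary: P rule: generate_topology_on.induct)
  case Empty
  then show ?case by simp
next
  case (Int a b)
  then obtain c1 c2 where "c1 \<in> A" "P \<in> pr_D A S add mul z c1" "pr_D A S add mul z c1 \<subseteq> a"
    "c2 \<in> A" "P \<in> pr_D A S add mul z c2" "pr_D A S add mul z c2 \<subseteq> b" by blast
  then show ?case using D_int mulA by (intro bexI[of _ "mul c1 c2"]) auto
next
  case (UN K)
  then show ?case by blast
next
  case (Basis s)
  then show ?case by blast
qed

lemma compact_D: assumes a: "a \<in> A"
  shows "compactin (pr_zariski A S add mul z) (pr_D A S add mul z a)"
  unfolding compactin_def
proof (intro conjI allI impI)
  show "pr_D A S add mul z a \<subseteq> topspace (pr_zariski A S add mul z)"
    unfolding pr_zariski_def topology_generated_by_topspace using a by blast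
next
  fix \<U> assume h: "(\<forall>U\<in>\<U>. openin (pr_zariski A S add mul z) U) \<and> pr_D A S add mul z a \<subseteq> \<Union>\<U>"
  define B where "B = {c \<in> A. \<exists>U\<in>\<U>. pr_D A S add mul z c \<subseteq> U}"
  have "pr_D A S add mul z a \<subseteq> (\<Union>b\<in>B. pr_D A S add mul z b)"
  proof
    fix P assume "P \<in> pr_D A S add mul z a"
    then obtain U where U: "U \<in> \<U>" "P \<in> U" using h by blast
    then have "generate_topology_on (pr_D A S add mul z ` A) U"
      using h unfolding pr_zariski_def openin_topology_generated_by_iff by blast
    then obtain c where "c \<in> A" "P \<in> pr_D A S add mul z c" "pr_D A S add mul z c \<subseteq> U"
      using open_basic U by blast
    then show "P \<in> (\<Union>b\<in>B. pr_D A S add mul z b)" unfolding B_def using U by blast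
  qed
  moreover have BA: "B \<subseteq> A" unfolding B_def by blast
  ultimately obtain B0 where B0: "finite B0" "B0 \<subseteq> B" "pr_D A S add mul z a \<subseteq> (\<Union>b\<in>B0. pr_D A S add mul z b)"
    using basic_cover[OF a BA] by blast
  have "\<forall>c\<in>B0. \<exists>U. U \<in> \<U> \<and> pr_D A S add mul z c \<subseteq> U"
  proof
    fix c assume "c \<in> B0"
    then have "c \<in> B" using B0(2) by blast
    then show "\<exists>U. U \<in> \<U> \<and> pr_D A S add mul z c \<subseteq> U" unfolding B_def by blast
  qed
  then obtain f where f: "\<And>c. c \<in> B0 \<Longrightarrow> f c \<in> \<U> \<and> pr_D A S add mul z c \<subseteq> f c" by metis
  have "finite (f ` B0)" using B0(1) by simp
  moreover have "f ` B0 \<subseteq> \<U>" using f by blast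
  moreover have "pr_D A S add mul z a \<subseteq> \<Union>(f ` B0)"
  proof
    fix P assume "P \<in> pr_D A S add mul z a"
    then obtain c where "c \<in> B0" "P \<in> pr_D A S add mul z c" using B0(3) by blast
    then show "P \<in> \<Union>(f ` B0)" using f by blast
  qed
  ultimately show "\<exists>\<F>. finite \<F> \<and> \<F> \<subseteq> \<U> \<and> pr_D A S add mul z a \<subseteq> \<Union>\<F>"
    by blast
qed

lemma spec_D: "pr_spec A S add mul z = pr_D A S add mul z u"
  unfolding pr_D_def pr_spec_def pr_prime_ideal_def using ideal_u by blast

end

theorem mainTheorem10:
  assumes "partial_ring A S add mul z u"
  shows "(\<forall>a \<in> A. compactin (pr_zariski A S add mul z) (pr_D A S add mul z a))
         \<and> compactin (pr_zariski A S add mul z) (pr_spec A S add mul z)"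
proof -
  interpret pring A S add mul z u by (rule pring.intro) (rule assms)
  have "\<forall>a \<in> A. compactin (pr_zariski A S add mul z) (pr_D A S add mul z a)"
    using compact_D by blast
  moreover have "compactin (pr_zariski A S add mul z) (pr_spec A S add mul z)"
    unfolding spec_D by (rule compact_D[OF uA])
  ultimately show ?thesis by (rule conjI)
qed

end
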